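(* Let $D=(\mathcal V,\mathcal A)$, $F$, $B$ and $T=(V,A,L)$ with root $r$ be as in the context, let $\mathcal S=F^{-1}(1)\cup B^{-1}(\mathbb N^+)$, and let $Q(X,z)$ be the polynomial defined there. Then $Q(X,z)$ contains, in its sum-product expansion (with nonzero coefficient), a monomial of the form $z^{|\mathcal S|}\,b(X)$, where $b(X)$ is a multilinear monomial in exactly $\eta$ distinct variables from $X=\{x_w: w\in\mathcal V\}$, if and only if $T$ has an $\mathcal S$-embedding into $D$.
   Context: $D=(\mathcal V,\mathcal A)$ is a digraph with $F:\mathcal V\to\{0,1\}$, $B:\mathcal V\to\mathbb N$; $T=(V,A)$ is a directed tree (orientation of a tree) of order $\eta$ with $L:V\to\mathbb N$, rooted at a vertex $r$; for $u\ne r$, $p(u)$ is its parent. For $u\in V$ let $N^{in}(u)=\{v: (v,u)\in A,\ v\neq p(u)\}$ and $N^{out}(u)=\{v:(u,v)\in A,\ v\ne p(u)\}$ (so $N^{in}(u)\cup N^{out}(u)$ is the set of children of $u$). Let $\mathcal S=F^{-1}(1)\cup B^{-1}(\mathbb N^+)$. Variables: $x_w$ for $w\in\mathcal V$, and $z$. For $u\in V,w\in\mathcal V$ set $\zeta(u,w)=z$ if $w\in\mathcal S$ and $L(u)\le B(w)$; $\zeta(u,w)=1$ if $w\notin\mathcal S$ and $L(u)\le B(w)$; $\zeta(u,w)=0$ if $L(u)>B(w)$. Define $Q_{u,w}(X)$ bottom-up: if $u$ has no children, $Q_{u,w}=\zeta(u,w)x_w$; otherwise $Q_{u,w}=\zeta(u,w)\,x_w\cdot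 Q^+_{u,w}\cdot Q^-_{u,w}$, where $Q^+_{u,w}=\prod_{v\in N^{in}(u)}\sum_{(w',w)\in\mathcal A}Q_{v,w'}$ and $Q^-_{u,w}=\prod_{v\in N^{out}(u)}\sum_{(w,w')\in\mathcal A}Q_{v,w'}$ (an empty product being omitted, i.e. equal to $1$). Finally $Q(X,z)=\sum_{w\in\mathcal V}Q_{r,w}(X)$. $T$ has an $\mathcal S$-embedding into $D$ if there is an injective map $f:V\to\mathcal V$ such that (E1) $(u,v)\in A$ implies $(f(u),f(v))\in\mathcal A$; (E2) $\mathcal S\subseteq f(V)$; (E3) $L(v)\le B(f(v))$ for all $v\in V$. *)

theory Defs
  imports Main "HOL-Library.Poly_Mapping"
begin

datatype 'v pvar = Xv 'v | Zv

(* Polynomials in the variables x_w, z with natural-number coefficients: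
   a monomial is a finitely supported exponent map, a polynomial a finitely
   supported coefficient map on monomials (MPoly-style representation). *)
type_synonym 'v poly_xz = "('v pvar \<Rightarrow>\<^sub>0 nat) \<Rightarrow>\<^sub>0 nat"

definition var_poly :: "'v pvar \<Rightarrow> 'v poly_xz" where
  "var_poly v = Poly_Mapping.single (Poly_Mapping.single v 1) 1"

definition rooted_oriented_tree ::
  "'a set \<Rightarrow> ('a \<times> 'a) set \<Rightarrow> 'a \<Rightarrow> ('a \<Rightarrow> 'a) \<Rightarrow> bool" where
  "rooted_oriented_tree V A r p \<longleftrightarrow>
     finite V \<and> r \<in> V \<and> A \<subseteq> V \<times> V \<and>
     (\<forall>u \<in> V - {r}. p u \<in> V \<and> (((p u, u) \<in> A) \<noteq> ((u, p u) \<in> A))) \<and>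
     (\<forall>(a, b) \<in> A. (b \<noteq> r \<and> a = p b) \<or> (a \<noteq> r \<and> b = p a)) \<and>
     (\<forall>u \<in> V. \<exists>k. (p ^^ k) u = r)"

definition children :: "'a set \<Rightarrow> 'a \<Rightarrow> ('a \<Rightarrow> 'a) \<Rightarrow> 'a \<Rightarrow> 'a set" where
  "children V r p u = {v \<in> V. v \<noteq> r \<and> p v = u}"

definition N_in :: "'a set \<Rightarrow> ('a \<times> 'a) set \<Rightarrow> 'a \<Rightarrow> ('a \<Rightarrow> 'a) \<Rightarrow> 'a \<Rightarrow> 'a set" where
  "N_in V A r p u = {v \<in> children V r p u. (v, u) \<in> A}"

definition N_out :: "'a set \<Rightarrow> ('a \<times> 'a) set \<Rightarrow> 'a \<Rightarrow> ('a \<Rightarrow> 'a) \<Rightarrow> 'a \<Rightarrow> 'a set" where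
  "N_out V A r p u = {v \<in> children V r p u. (u, v) \<in> A}"

definition Sset :: "'v set \<Rightarrow> ('v \<Rightarrow> nat) \<Rightarrow> ('v \<Rightarrow> nat) \<Rightarrow> 'v set" where
  "Sset \<V> F B = {w \<in> \<V>. F w = 1 \<or> B w > 0}"

definition zeta :: "'v set \<Rightarrow> ('v \<Rightarrow> nat) \<Rightarrow> ('v \<Rightarrow> nat) \<Rightarrow> ('a \<Rightarrow> nat) \<Rightarrow> 'a \<Rightarrow> 'v \<Rightarrow> 'v poly_xz" where
  "zeta \<V> F B L u w =
     (if L u \<le> B w then (if w \<in> Sset \<V> F B then var_poly Zv else 1) else 0)"

(* Q_{u,w}, defined bottom-up; the first argument is recursion fuel (the
   recursion is on the subtree of u; fuel card V suffices, see Qpoly). *)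
fun Qf :: "nat \<Rightarrow> 'v set \<Rightarrow> ('v \<times> 'v) set \<Rightarrow> ('v \<Rightarrow> nat) \<Rightarrow> ('v \<Rightarrow> nat) \<Rightarrow>
            'a set \<Rightarrow> ('a \<times> 'a) set \<Rightarrow> ('a \<Rightarrow> nat) \<Rightarrow> 'a \<Rightarrow> ('a \<Rightarrow> 'a) \<Rightarrow>
            'a \<Rightarrow> 'v \<Rightarrow> 'v poly_xz" where
  "Qf 0 \<V> \<A> F B V A L r p u w = 0"
| "Qf (Suc n) \<V> \<A> F B V A L r p u w =
     zeta \<V> F B L u w * var_poly (Xv w)
     * (\<Prod>v \<in> N_in V A r p u. \<Sum>w' \<in> {w'. (w', w) \<in> \<A>}. Qf n \<V> \<A> F B V A L r p v w')
     * (\<Prod>v \<in> N_out V A r p u. \<Sum>w' \<in> {w'. (w, w') \<in> \<A>}. Qf n \<V> \<A> F B V A L r p v w')"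

definition Quw where
  "Quw \<V> \<A> F B V A L r p u w = Qf (card V) \<V> \<A> F B V A L r p u w"

definition Qpoly where
  "Qpoly \<V> \<A> F B V A L r p = (\<Sum>w \<in> \<V>. Quw \<V> \<A> F B V A L r p r w)"

definition S_embedding ::
  "'v set \<Rightarrow> ('v \<times> 'v) set \<Rightarrow> ('v \<Rightarrow> nat) \<Rightarrow> ('v \<Rightarrow> nat) \<Rightarrow>
   'a set \<Rightarrow> ('a \<times> 'a) set \<Rightarrow> ('a \<Rightarrow> nat) \<Rightarrow> ('a \<Rightarrow> 'v) \<Rightarrow> bool" where
  "S_embedding \<V> \<A> F B V A L f \<longleftrightarrow>
     inj_on f V \<and> f ` V \<subseteq> \<V> \<and>
     (\<forall>(u, v) \<in> A. (f u, f v) \<in> \<A>) \<and>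
     Sset \<V> F B \<subseteq> f ` V \<and>
     (\<forall>v \<in> V. L v \<le> B (f v))"

end

theory Submission
  imports Defs
begin



lemma Sum_any_nat_nz:
  fixes h :: "'a \<Rightarrow> nat"
  assumes "finite {a. h a \<noteq> 0}" "h x \<noteq> 0"
  shows "Sum_any h \<noteq> 0"
  using assms Sum_any_eq_zero_iff by (metis)

lemma lookup_mult_nz:
  fixes f g :: "('m::comm_monoid_add \<Rightarrow>\<^sub>0 nat)"
  shows "Poly_Mapping.lookup (f * g) m \<noteq> 0 \<longleftrightarrow> (\<exists>a b. m = a + b \<and> Poly_Mapping.lookup f a \<noteq> 0 \<and> Poly_Mapping.lookup g b \<noteq> 0)"
proof
  assume "Poly_Mapping.lookup (f * g) m \<noteq> 0"
  then have "m \<in> Poly_Mapping.keys (f*g)" by (simp add: in_keys_iff)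
  then show "\<exists>a b. m = a + b \<and> Poly_Mapping.lookup f a \<noteq> 0 \<and> Poly_Mapping.lookup g b \<noteq> 0"
  proof -
    have "m \<in> {a + b |a b. a \<in> Poly_Mapping.keys f \<and> b \<in> Poly_Mapping.keys g}"
      using keys_mult[of f g] \<open>m \<in> Poly_Mapping.keys (f*g)\<close> by blast
    then show ?thesis unfolding in_keys_iff by blast
  qed
next
  assume "\<exists>a b. m = a + b \<and> Poly_Mapping.lookup f a \<noteq> 0 \<and> Poly_Mapping.lookup g b \<noteq> 0"
  then obtain a b where m: "m = a + b" and fa: "Poly_Mapping.lookup f a \<noteq> 0" and gb: "Poly_Mapping.lookup g b \<noteq> 0" by blast
  have fin1: "finite {q. (Poly_Mapping.lookup g q when m = l + q) \<noteq> 0}" for l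
    by (rule finite_subset[of _ "Poly_Mapping.keys g"]) (auto simp: in_keys_iff when_def split: if_splits)
  have inner: "(\<Sum>q. Poly_Mapping.lookup g q when m = a + q) \<noteq> 0"
    by (rule Sum_any_nat_nz[OF fin1, of b]) (use gb m in auto)
  have fin2: "finite {l. Poly_Mapping.lookup f l * (\<Sum>q. Poly_Mapping.lookup g q when m = l + q) \<noteq> 0}"
    by (rule finite_subset[of _ "Poly_Mapping.keys f"]) (auto simp: in_keys_iff)
  show "Poly_Mapping.lookup (f * g) m \<noteq> 0"
    unfolding lookup_mult
    by (rule Sum_any_nat_nz[OF fin2, of a]) (use fa inner in auto)
qed

lemma lookup_sum_nz:
  fixes f :: "'i \<Rightarrow> ('m \<Rightarrow>\<^sub>0 nat)"
  assumes "finite I"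
  shows "Poly_Mapping.lookup (sum f I) m \<noteq> 0 \<longleftrightarrow> (\<exists>i\<in>I. Poly_Mapping.lookup (f i) m \<noteq> 0)"
  using assms by (simp add: lookup_sum)

lemma lookup_prod_nz:
  fixes f :: "'i \<Rightarrow> ('m::comm_monoid_add \<Rightarrow>\<^sub>0 nat)"
  assumes "finite I"
  shows "Poly_Mapping.lookup (prod f I) m \<noteq> 0 \<longleftrightarrow> (\<exists>a. m = sum a I \<and> (\<forall>i\<in>I. Poly_Mapping.lookup (f i) (a i) \<noteq> 0))"
  using assms
proof (induction I arbitrary: m rule: finite_induct)
  case empty
  then show ?case by (simp add: lookup_one when_def)
next
  case (insert i I)
  show ?case
  proof
    assume "Poly_Mapping.lookup (prod f (insert i I)) m \<noteq> 0"
    then have "Poly_Mapping.lookup (f i * prod f I) m \<noteq> 0" using insert by simp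
    then obtain b c where "m = b + c" "Poly_Mapping.lookup (f i) b \<noteq> 0" "Poly_Mapping.lookup (prod f I) c \<noteq> 0"
      unfolding lookup_mult_nz by blast
    then obtain a where "c = sum a I" "\<forall>j\<in>I. Poly_Mapping.lookup (f j) (a j) \<noteq> 0"
      using insert.IH by blast
    moreover have "sum (a(i:=b)) I = sum a I" using insert by (intro sum.cong) auto
    ultimately show "\<exists>a. m = sum a (insert i I) \<and> (\<forall>j\<in>insert i I. Poly_Mapping.lookup (f j) (a j) \<noteq> 0)"
      using insert \<open>m = b + c\<close> \<open>Poly_Mapping.lookup (f i) b \<noteq> 0\<close>
      by (intro exI[of _ "a(i:=b)"]) auto
  next
    assume "\<exists>a. m = sum a (insert i I) \<and> (\<forall>j\<in>insert i I. Poly_Mapping.lookup (f j) (a j) \<noteq> 0)"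
    then obtain a where "m = sum a (insert i I)" "\<forall>j\<in>insert i I. Poly_Mapping.lookup (f j) (a j) \<noteq> 0" by blast
    then have "Poly_Mapping.lookup (f i * prod f I) m \<noteq> 0"
      unfolding lookup_mult_nz using insert by (intro exI[of _ "a i"] exI[of _ "sum a I"]) auto
    then show "Poly_Mapping.lookup (prod f (insert i I)) m \<noteq> 0"
      using insert by simp
  qed
qed




definition dep :: "('a \<Rightarrow> 'a) \<Rightarrow> 'a \<Rightarrow> 'a \<Rightarrow> nat" where
  "dep p r u = (LEAST k. (p ^^ k) u = r)"

definition sub :: "'a set \<Rightarrow> ('a \<Rightarrow> 'a) \<Rightarrow> 'a \<Rightarrow> 'a \<Rightarrow> 'a set" where
  "sub V p r u = {x \<in> V. \<exists>k \<le> dep p r x. (p ^^ k) x = u}"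

context
  fixes V :: "'a set" and A r p
  assumes T: "rooted_oriented_tree V A r p"
begin

lemma T_fin: "finite V" using T unfolding rooted_oriented_tree_def by blast
lemma T_r: "r \<in> V" using T unfolding rooted_oriented_tree_def by blast
lemma T_A: "A \<subseteq> V \<times> V" using T unfolding rooted_oriented_tree_def by blast
lemma T_p: "u \<in> V \<Longrightarrow> u \<noteq> r \<Longrightarrow> p u \<in> V \<and> (((p u, u) \<in> A) \<noteq> ((u, p u) \<in> A))"
  using T unfolding rooted_oriented_tree_def by blast
lemma T_arc: "(a, b) \<in> A \<Longrightarrow> (b \<noteq> r \<and> a = p b) \<or> (a \<noteq> r \<and> b = p a)"
  using T unfolding rooted_oriented_tree_def by blast
lemma T_reach: "u \<in> V \<Longrightarrow> \<exists>k. (p ^^ k) u = r"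
  using T unfolding rooted_oriented_tree_def by blast

lemma dep1: "u \<in> V \<Longrightarrow> (p ^^ dep p r u) u = r"
  unfolding dep_def by (rule LeastI_ex, rule T_reach)

lemma dep2: "j < dep p r u \<Longrightarrow> (p ^^ j) u \<noteq> r"
  unfolding dep_def using not_less_Least by blast

lemma iter_in: "x \<in> V \<Longrightarrow> k \<le> dep p r x \<Longrightarrow> (p ^^ k) x \<in> V"
proof (induction k)
  case 0 then show ?case by simp
next
  case (Suc k)
  then have "(p ^^ k) x \<in> V" "(p ^^ k) x \<noteq> r" using dep2[of k x] by auto
  then have "p ((p ^^ k) x) \<in> V" using T_p by blast
  then show ?case by simp
qed

lemma dep_iter: "x \<in> V \<Longrightarrow> k \<le> dep p r x \<Longrightarrow> dep p r ((p ^^ k) x) = dep p r x - k"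
proof -
  assume x: "x \<in> V" and k: "k \<le> dep p r x"
  let ?y = "(p ^^ k) x"
  have "(p ^^ (dep p r x - k)) ?y = (p ^^ (dep p r x - k + k)) x" by (simp add: funpow_add)
  also have "\<dots> = r" using dep1[OF x] k by simp
  finally have "(p ^^ (dep p r x - k)) ?y = r" .
  then have le: "dep p r ?y \<le> dep p r x - k" unfolding dep_def by (rule Least_le)
  have "?y \<in> V" using iter_in x k by blast
  then have "(p ^^ dep p r ?y) ?y = r" by (rule dep1)
  then have "(p ^^ (dep p r ?y + k)) x = r" by (simp add: funpow_add)
  then have "\<not> dep p r ?y + k < dep p r x" using dep2 by blast
  then show ?thesis using le by linarith
qed

lemma dep_lt: "u \<in> V \<Longrightarrow> dep p r u < card V"
proof -
  assume u: "u \<in> V"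
  have inj: "inj_on (\<lambda>i. (p ^^ i) u) {0..dep p r u}"
  proof (rule inj_onI, rule ccontr)
    fix i j assume i: "i \<in> {0..dep p r u}" and j: "j \<in> {0..dep p r u}" and e: "(p ^^ i) u = (p ^^ j) u" and ne: "i \<noteq> j"
    have *: "False" if i: "i \<in> {0..dep p r u}" and j: "j \<in> {0..dep p r u}" and e: "(p ^^ i) u = (p ^^ j) u" and lt: "i < j" for i j
    proof -
      have "(p ^^ (dep p r u - j + i)) u = (p ^^ (dep p r u - j)) ((p ^^ i) u)" by (simp add: funpow_add)
      also have "\<dots> = (p ^^ (dep p r u - j)) ((p ^^ j) u)" using e by simp
      also have "\<dots> = (p ^^ (dep p r u - j + j)) u" by (simp add: funpow_add)
      also have "\<dots> = r" using dep1[OF u] j by simp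
      finally have eq: "(p ^^ (dep p r u - j + i)) u = r" .
      have "dep p r u - j + i < dep p r u" using lt j by simp
      then show False using dep2 eq by blast
    qed
    show False
    proof (cases "i < j")
      case True then show False using * i j e by blast
    next
      case False then have "j < i" using ne by simp
      then show False using *[of j i] i j e by simp
    qed
  qed
  have sub: "(\<lambda>i. (p ^^ i) u) ` {0..dep p r u} \<subseteq> V" using iter_in u by auto
  have "card {0..dep p r u} = card ((\<lambda>i. (p ^^ i) u) ` {0..dep p r u})" using card_image[OF inj] by simp
  also have "\<dots> \<le> card V" using card_mono[OF T_fin sub] .
  finally have "card {0..dep p r u} \<le> card V" .
  then show ?thesis by simp
qed

lemma child_dep: "v \<in> children V r p u \<Longrightarrow> u \<in> V \<and> dep p r v = Suc (dep p r u)"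
proof -
  assume "v \<in> children V r p u"
  then have v: "v \<in> V" "v \<noteq> r" "p v = u" unfolding children_def by auto
  then have u: "u \<in> V" using T_p by auto
  have "dep p r v \<noteq> 0" using v dep1 by (metis funpow_0)
  then have "dep p r ((p ^^ 1) v) = dep p r v - 1" using dep_iter[OF v(1), of 1] by simp
  then show ?thesis using u v \<open>dep p r v \<noteq> 0\<close> by simp
qed

lemma sub_self: "u \<in> V \<Longrightarrow> u \<in> sub V p r u"
  unfolding sub_def by (auto intro: exI[of _ 0])

lemma sub_subset: "sub V p r u \<subseteq> V"
  unfolding sub_def by auto

lemma sub_child_eq: "x \<in> sub V p r v \<Longrightarrow> v \<in> children V r p u \<Longrightarrow> (p ^^ (dep p r x - Suc (dep p r u))) x = v"
proof -
  assume x: "x \<in> sub V p r v" and v: "v \<in> children V r p u"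
  then obtain k where k: "k \<le> dep p r x" "(p ^^ k) x = v" "x \<in> V" unfolding sub_def by auto
  have "dep p r v = dep p r x - k" using dep_iter k by metis
  then show ?thesis using child_dep[OF v] k by simp
qed

lemma u_notin_sub_child: "v \<in> children V r p u \<Longrightarrow> u \<notin> sub V p r v"
proof
  assume v: "v \<in> children V r p u" and u: "u \<in> sub V p r v"
  then obtain k where k: "k \<le> dep p r u" "(p ^^ k) u = v" "u \<in> V" unfolding sub_def by auto
  have "dep p r v = dep p r u - k" using dep_iter k by metis
  then show False using child_dep[OF v] by simp
qed

lemma sub_disj: "v1 \<in> children V r p u \<Longrightarrow> v2 \<in> children V r p u \<Longrightarrow> x \<in> sub V p r v1 \<Longrightarrow> x \<in> sub V p r v2 \<Longrightarrow> v1 = v2"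
  using sub_child_eq by metis

lemma sub_closed: "x \<in> sub V p r v \<Longrightarrow> children V r p x \<subseteq> sub V p r v"
proof
  fix y assume x: "x \<in> sub V p r v" and y: "y \<in> children V r p x"
  then obtain k where k: "k \<le> dep p r x" "(p ^^ k) x = v" "x \<in> V" unfolding sub_def by auto
  have yy: "y \<in> V" "p y = x" using y unfolding children_def by auto
  have "(p ^^ Suc k) y = v" using k yy by (simp add: funpow_Suc_right del: funpow.simps)
  moreover have "Suc k \<le> dep p r y" using child_dep[OF y] k by simp
  ultimately show "y \<in> sub V p r v" unfolding sub_def using yy by blast
qed

lemma sub_decomp: "u \<in> V \<Longrightarrow> sub V p r u = insert u (\<Union>v\<in>children V r p u. sub V p r v)"
proof
  assume u: "u \<in> V"
  show "sub V p r u \<subseteq> insert u (\<Union>v\<in>children V r p u. sub V p r v)"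
  proof
    fix x assume "x \<in> sub V p r u"
    then obtain k where k: "k \<le> dep p r x" "(p ^^ k) x = u" "x \<in> V" unfolding sub_def by auto
    show "x \<in> insert u (\<Union>v\<in>children V r p u. sub V p r v)"
    proof (cases k)
      case 0 then show ?thesis using k by simp
    next
      case (Suc j)
      let ?v = "(p ^^ j) x"
      have vV: "?v \<in> V" using iter_in k Suc by simp
      have vr: "?v \<noteq> r" using dep2[of j x] k Suc by simp
      have pv: "p ?v = u" using k Suc by simp
      have "?v \<in> children V r p u" using vV vr pv unfolding children_def by simp
      moreover have "x \<in> sub V p r ?v" unfolding sub_def using k Suc by (auto intro!: exI[of _ j])
      ultimately show ?thesis by blast
    qed
  qed
next
  assume u: "u \<in> V"
  show "insert u (\<Union>v\<in>children V r p u. sub V p r v) \<subseteq> sub V p r u"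
  proof -
    have "sub V p r v \<subseteq> sub V p r u" if v: "v \<in> children V r p u" for v
    proof
      fix x assume x: "x \<in> sub V p r v"
      then obtain k where k: "k \<le> dep p r x" "(p ^^ k) x = v" "x \<in> V" unfolding sub_def by auto
      have "dep p r v = dep p r x - k" using dep_iter k by metis
      then have "Suc k \<le> dep p r x" using child_dep[OF v] by simp
      moreover have "(p ^^ Suc k) x = u" using k v unfolding children_def by simp
      ultimately show "x \<in> sub V p r u" unfolding sub_def using k by blast
    qed
    then show ?thesis using sub_self[OF u] by blast
  qed
qed

lemma sub_root: "sub V p r r = V"
proof
  show "sub V p r r \<subseteq> V" by (rule sub_subset)
  show "V \<subseteq> sub V p r r"
  proof
    fix x assume x: "x \<in> V"
    then have "(p ^^ dep p r x) x = r" by (rule dep1)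
    then show "x \<in> sub V p r r" unfolding sub_def using x by blast
  qed
qed

lemma children_split: "children V r p u = N_in V A r p u \<union> N_out V A r p u"
  "N_in V A r p u \<inter> N_out V A r p u = {}"
proof -
  have "(v, u) \<in> A \<or> (u, v) \<in> A" "\<not> ((v, u) \<in> A \<and> (u, v) \<in> A)" if "v \<in> children V r p u" for v
  proof -
    have v: "v \<in> V" "v \<noteq> r" "p v = u" using that unfolding children_def by auto
    have "((p v, v) \<in> A) \<noteq> ((v, p v) \<in> A)" using T_p[OF v(1,2)] by blast
    then show "(v, u) \<in> A \<or> (u, v) \<in> A" "\<not> ((v, u) \<in> A \<and> (u, v) \<in> A)" using v(3) by auto
  qed
  then show "children V r p u = N_in V A r p u \<union> N_out V A r p u"
    "N_in V A r p u \<inter> N_out V A r p u = {}"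
    unfolding N_in_def N_out_def by blast+
qed

lemma children_fin: "finite (children V r p u)"
  using T_fin unfolding children_def by auto

end




definition mv :: "'v set \<Rightarrow> ('v \<Rightarrow> nat) \<Rightarrow> ('v \<Rightarrow> nat) \<Rightarrow> 'v \<Rightarrow> ('v pvar \<Rightarrow>\<^sub>0 nat)" where
  "mv VV F B w = Poly_Mapping.single (Xv w) 1 + (if w \<in> Sset VV F B then Poly_Mapping.single Zv 1 else 0)"

definition monoQ :: "'v set \<Rightarrow> ('v \<Rightarrow> nat) \<Rightarrow> ('v \<Rightarrow> nat) \<Rightarrow> 'a set \<Rightarrow> ('a \<Rightarrow> 'v) \<Rightarrow> ('v pvar \<Rightarrow>\<^sub>0 nat)" where
  "monoQ VV F B X g = (\<Sum>x\<in>X. mv VV F B (g x))"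

definition goodS where
  "goodS VV AA B V A L r p X g \<longleftrightarrow> (\<forall>x\<in>X. g x \<in> VV \<and> L x \<le> B (g x) \<and>
     (\<forall>v\<in>N_in V A r p x. (g v, g x) \<in> AA) \<and> (\<forall>v\<in>N_out V A r p x. (g x, g v) \<in> AA))"

lemma zeta_var: "zeta VV F B L u w * var_poly (Xv w) =
   (if L u \<le> B w then Poly_Mapping.single (mv VV F B w) 1 else 0)"
  unfolding zeta_def var_poly_def mv_def by (simp add: mult_single add.commute)

lemma lookup_single1_mult_nz:
  fixes P :: "('m::comm_monoid_add \<Rightarrow>\<^sub>0 nat)"
  shows "Poly_Mapping.lookup (Poly_Mapping.single a 1 * P) m \<noteq> 0 \<longleftrightarrow> (\<exists>b. m = a + b \<and> Poly_Mapping.lookup P b \<noteq> 0)"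
  unfolding lookup_mult_nz by (auto simp: lookup_single when_def)

lemma goodS_cong:
  assumes "\<And>y. y \<in> X \<Longrightarrow> g y = h y"
    and "\<And>x. x \<in> X \<Longrightarrow> N_in V A r p x \<subseteq> X \<and> N_out V A r p x \<subseteq> X"
  shows "goodS VV AA B V A L r p X g = goodS VV AA B V A L r p X h"
proof -
  have "\<And>x v. x \<in> X \<Longrightarrow> v \<in> N_in V A r p x \<Longrightarrow> g v = h v"
       "\<And>x v. x \<in> X \<Longrightarrow> v \<in> N_out V A r p x \<Longrightarrow> g v = h v"
    using assms by blast+
  then show ?thesis unfolding goodS_def using assms(1) by (metis (no_types, lifting))
qed

lemma goodS_mono: "goodS VV AA B V A L r p X g \<Longrightarrow> Y \<subseteq> X \<Longrightarrow> goodS VV AA B V A L r p Y g"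
  unfolding goodS_def by blast

context
  fixes VV :: "'v set" and AA :: "('v \<times> 'v) set" and F B :: "'v \<Rightarrow> nat"
    and V :: "'a set" and A :: "('a \<times> 'a) set" and L :: "'a \<Rightarrow> nat"
    and r :: 'a and p :: "'a \<Rightarrow> 'a"
  assumes T: "rooted_oriented_tree V A r p" and fV: "finite VV" and sA: "AA \<subseteq> VV \<times> VV"
begin

lemma sub_closed_N: "x \<in> sub V p r v \<Longrightarrow> N_in V A r p x \<subseteq> sub V p r v \<and> N_out V A r p x \<subseteq> sub V p r v"
  using sub_closed[OF T] unfolding N_in_def N_out_def by blast

lemma mono_decomp: "u \<in> V \<Longrightarrow> monoQ VV F B (sub V p r u) g =
   mv VV F B (g u) + (\<Sum>v\<in>children V r p u. monoQ VV F B (sub V p r v) g)"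
proof -
  assume u: "u \<in> V"
  have fin: "finite (sub V p r v)" for v using finite_subset[OF sub_subset[OF T] T_fin[OF T]] .
  have "u \<notin> (\<Union>v\<in>children V r p u. sub V p r v)" using u_notin_sub_child[OF T] by blast
  moreover have "finite (\<Union>v\<in>children V r p u. sub V p r v)" using fin children_fin[OF T] by blast
  ultimately have "monoQ VV F B (sub V p r u) g = mv VV F B (g u) + (\<Sum>x\<in>(\<Union>v\<in>children V r p u. sub V p r v). mv VV F B (g x))"
    unfolding monoQ_def sub_decomp[OF T u] by simp
  also have "(\<Sum>x\<in>(\<Union>v\<in>children V r p u. sub V p r v). mv VV F B (g x)) = (\<Sum>v\<in>children V r p u. monoQ VV F B (sub V p r v) g)"
    unfolding monoQ_def
    by (rule sum.UNION_disjoint[OF children_fin[OF T]]) (use fin sub_disj[OF T] in blast)+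
  finally show ?thesis .
qed

lemma finA: "finite {w'. (w', w) \<in> AA}" "finite {w'. (w, w') \<in> AA}"
proof -
  have "{w'. (w', w) \<in> AA} \<subseteq> VV" "{w'. (w, w') \<in> AA} \<subseteq> VV" using sA by auto
  then show "finite {w'. (w', w) \<in> AA}" "finite {w'. (w, w') \<in> AA}" using fV finite_subset by auto
qed

lemma Qf_char:
  "u \<in> V \<Longrightarrow> w \<in> VV \<Longrightarrow> card V \<le> n + dep p r u \<Longrightarrow>
   Poly_Mapping.lookup (Qf n VV AA F B V A L r p u w) m \<noteq> 0 \<longleftrightarrow>
   (\<exists>g. goodS VV AA B V A L r p (sub V p r u) g \<and> g u = w \<and> m = monoQ VV F B (sub V p r u) g)"
proof (induction n arbitrary: u w m)
  case 0
  then show ?case using dep_lt[OF T, of u] by simp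
next
  case (Suc n)
  note u = Suc.prems(1) and w = Suc.prems(2)
  let ?C = "children V r p u" and ?I = "N_in V A r p u" and ?O = "N_out V A r p u"
  let ?PI = "\<Prod>v \<in> ?I. \<Sum>w' \<in> {w'. (w', w) \<in> AA}. Qf n VV AA F B V A L r p v w'"
  let ?PO = "\<Prod>v \<in> ?O. \<Sum>w' \<in> {w'. (w, w') \<in> AA}. Qf n VV AA F B V A L r p v w'"
  have finC: "finite ?C" by (rule children_fin[OF T])
  have CIO: "?C = ?I \<union> ?O" "?I \<inter> ?O = {}" using children_split[OF T] by blast+
  have finI: "finite ?I" and finO: "finite ?O" using finC CIO by auto
  have IH: "Poly_Mapping.lookup (Qf n VV AA F B V A L r p v w') m' \<noteq> 0 \<longleftrightarrow>
     (\<exists>g. goodS VV AA B V A L r p (sub V p r v) g \<and> g v = w' \<and> m' = monoQ VV F B (sub V p r v) g)"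
    if v: "v \<in> ?C" and w': "w' \<in> VV" for v w' m'
  proof -
    have "v \<in> V" using v unfolding children_def by auto
    moreover have "card V \<le> n + dep p r v" using child_dep[OF T v] Suc.prems(3) by simp
    ultimately show ?thesis using Suc.IH w' by blast
  qed
  have Qeq: "Qf (Suc n) VV AA F B V A L r p u w =
     (if L u \<le> B w then Poly_Mapping.single (mv VV F B w) 1 else 0) * ?PI * ?PO"
    by (simp only: Qf.simps zeta_var)
  have sumC: "(\<Sum>v\<in>?I. a v) + (\<Sum>v\<in>?O. a v) = (\<Sum>v\<in>?C. a v)" for a :: "'a \<Rightarrow> ('v pvar \<Rightarrow>\<^sub>0 nat)"
    unfolding CIO(1) by (rule sym, rule sum.union_disjoint[OF finI finO CIO(2)])
  show ?case
  proof
    assume nz: "Poly_Mapping.lookup (Qf (Suc n) VV AA F B V A L r p u w) m \<noteq> 0"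
    have nz': "Poly_Mapping.lookup ((if L u \<le> B w then Poly_Mapping.single (mv VV F B w) 1 else 0) * ?PI * ?PO) m \<noteq> 0"
      using nz unfolding Qeq .
    have Lu: "L u \<le> B w"
    proof (rule ccontr)
      assume "\<not> L u \<le> B w"
      then have "(if L u \<le> B w then Poly_Mapping.single (mv VV F B w) 1 else 0) * ?PI * ?PO = 0" by (simp only: if_False mult_zero_left)
      then show False using nz' by (simp only: lookup_zero)
    qed
    have "Poly_Mapping.lookup (Poly_Mapping.single (mv VV F B w) 1 * (?PI * ?PO)) m \<noteq> 0"
      using nz' unfolding if_P[OF Lu] mult.assoc .
    then obtain b where b: "m = mv VV F B w + b" "Poly_Mapping.lookup (?PI * ?PO) b \<noteq> 0"
      unfolding lookup_single1_mult_nz by blast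
    then obtain b1 b2 where bb: "b = b1 + b2" "Poly_Mapping.lookup ?PI b1 \<noteq> 0" "Poly_Mapping.lookup ?PO b2 \<noteq> 0"
      unfolding lookup_mult_nz by blast
    obtain a1 where a1: "b1 = sum a1 ?I" "\<forall>v\<in>?I. Poly_Mapping.lookup (\<Sum>w' \<in> {w'. (w', w) \<in> AA}. Qf n VV AA F B V A L r p v w') (a1 v) \<noteq> 0"
      using bb(2) unfolding lookup_prod_nz[OF finI] by blast
    obtain a2 where a2: "b2 = sum a2 ?O" "\<forall>v\<in>?O. Poly_Mapping.lookup (\<Sum>w' \<in> {w'. (w, w') \<in> AA}. Qf n VV AA F B V A L r p v w') (a2 v) \<noteq> 0"
      using bb(3) unfolding lookup_prod_nz[OF finO] by blast
    define a where "a v = (if v \<in> ?I then a1 v else a2 v)" for v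
    have mdec: "m = mv VV F B w + sum a ?C"
    proof -
      have "sum a1 ?I = sum a ?I" unfolding a_def by (rule sum.cong) auto
      moreover have "sum a2 ?O = sum a ?O" unfolding a_def using CIO(2) by (intro sum.cong) auto
      ultimately show ?thesis using b(1) bb(1) a1(1) a2(1) sumC[of a] by (simp add: add.assoc)
    qed
    have ex: "\<forall>v\<in>?C. \<exists>g. goodS VV AA B V A L r p (sub V p r v) g \<and> a v = monoQ VV F B (sub V p r v) g
             \<and> (v \<in> ?I \<longrightarrow> (g v, w) \<in> AA) \<and> (v \<in> ?O \<longrightarrow> (w, g v) \<in> AA)"
    proof
      fix v assume v: "v \<in> ?C"
      show "\<exists>g. goodS VV AA B V A L r p (sub V p r v) g \<and> a v = monoQ VV F B (sub V p r v) g
             \<and> (v \<in> ?I \<longrightarrow> (g v, w) \<in> AA) \<and> (v \<in> ?O \<longrightarrow> (w, g v) \<in> AA)"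
    proof (cases "v \<in> ?I")
      case True
      have "Poly_Mapping.lookup (\<Sum>w' \<in> {w'. (w', w) \<in> AA}. Qf n VV AA F B V A L r p v w') (a1 v) \<noteq> 0"
        using a1(2) True by blast
      then obtain w' where w': "(w', w) \<in> AA" "Poly_Mapping.lookup (Qf n VV AA F B V A L r p v w') (a1 v) \<noteq> 0"
        unfolding lookup_sum_nz[OF finA(1)] by blast
      have "w' \<in> VV" using w'(1) sA by blast
      then obtain g where g: "goodS VV AA B V A L r p (sub V p r v) g" "g v = w'" "a1 v = monoQ VV F B (sub V p r v) g"
        using IH[OF v \<open>w' \<in> VV\<close>, of "a1 v"] w'(2) by blast
      have nO: "v \<notin> ?O" using True CIO(2) by blast
      have av: "a v = a1 v" unfolding a_def using True by simp
      show ?thesis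
        by (rule exI[of _ g]) (simp only: g av w'(1) nO True simp_thms)
    next
      case False
      then have vO: "v \<in> ?O" using v CIO(1) by blast
      have "Poly_Mapping.lookup (\<Sum>w' \<in> {w'. (w, w') \<in> AA}. Qf n VV AA F B V A L r p v w') (a2 v) \<noteq> 0"
        using a2(2) vO by blast
      then obtain w' where w': "(w, w') \<in> AA" "Poly_Mapping.lookup (Qf n VV AA F B V A L r p v w') (a2 v) \<noteq> 0"
        unfolding lookup_sum_nz[OF finA(2)] by blast
      have "w' \<in> VV" using w'(1) sA by blast
      then obtain g where g: "goodS VV AA B V A L r p (sub V p r v) g" "g v = w'" "a2 v = monoQ VV F B (sub V p r v) g"
        using IH[OF v \<open>w' \<in> VV\<close>, of "a2 v"] w'(2) by blast
      have av: "a v = a2 v" unfolding a_def using False by simp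
      show ?thesis
        by (rule exI[of _ g]) (simp only: g av w'(1) vO False simp_thms)
    qed
    qed
    obtain G where G: "\<forall>v\<in>?C. goodS VV AA B V A L r p (sub V p r v) (G v) \<and> a v = monoQ VV F B (sub V p r v) (G v)
             \<and> (v \<in> ?I \<longrightarrow> (G v v, w) \<in> AA) \<and> (v \<in> ?O \<longrightarrow> (w, G v v) \<in> AA)"
      using bchoice[OF ex] by blast
    define g where "g x = (if x = u then w else G ((p ^^ (dep p r x - Suc (dep p r u))) x) x)" for x
    have gG: "g y = G v y" if v: "v \<in> ?C" and y: "y \<in> sub V p r v" for v y
    proof -
      have "y \<noteq> u" using u_notin_sub_child[OF T v] y by blast
      then show ?thesis unfolding g_def using sub_child_eq[OF T y v] by simp
    qed
    have gsub: "goodS VV AA B V A L r p (sub V p r v) g" if v: "v \<in> ?C" for v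
    proof -
      have "goodS VV AA B V A L r p (sub V p r v) g = goodS VV AA B V A L r p (sub V p r v) (G v)"
        by (rule goodS_cong) (use gG[OF v] sub_closed_N in blast)+
      then show ?thesis using G v by blast
    qed
    have vV: "v \<in> V" if "v \<in> ?C" for v using that unfolding children_def by auto
    have gv: "g v = G v v" if "v \<in> ?C" for v using gG[OF that sub_self[OF T vV[OF that]]] .
    have gu: "g u = w" unfolding g_def by simp
    have goodu: "goodS VV AA B V A L r p {u} g"
      unfolding goodS_def
    proof (intro ballI conjI)
      fix x assume "x \<in> {u}"
      then have x: "x = u" by simp
      show "g x \<in> VV" using x gu w by simp
      show "L x \<le> B (g x)" using x gu Lu by simp
      show "(g v, g x) \<in> AA" if v: "v \<in> N_in V A r p x" for v
      proof -
        have vI: "v \<in> ?I" using v x by simp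
        then have vC: "v \<in> ?C" using CIO(1) by blast
        have "(G v v, w) \<in> AA" using G vC vI by blast
        then show ?thesis using gv[OF vC] gu x by simp
      qed
      show "(g x, g v) \<in> AA" if v: "v \<in> N_out V A r p x" for v
      proof -
        have vI: "v \<in> ?O" using v x by simp
        then have vC: "v \<in> ?C" using CIO(1) by blast
        have "(w, G v v) \<in> AA" using G vC vI by blast
        then show ?thesis using gv[OF vC] gu x by simp
      qed
    qed
    have "goodS VV AA B V A L r p (sub V p r u) g"
      unfolding sub_decomp[OF T u] using goodu gsub unfolding goodS_def by blast
    moreover have "m = monoQ VV F B (sub V p r u) g"
    proof -
      have "sum a ?C = (\<Sum>v\<in>?C. monoQ VV F B (sub V p r v) g)"
      proof (rule sum.cong)
        fix v assume v: "v \<in> ?C"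
        have "monoQ VV F B (sub V p r v) g = monoQ VV F B (sub V p r v) (G v)"
          unfolding monoQ_def using gG[OF v] by simp
        then show "a v = monoQ VV F B (sub V p r v) g" using G v by simp
      qed simp
      then show ?thesis using mdec mono_decomp[OF u, of g] gu by simp
    qed
    ultimately show "\<exists>g. goodS VV AA B V A L r p (sub V p r u) g \<and> g u = w \<and> m = monoQ VV F B (sub V p r u) g"
      using gu by blast
  next
    assume "\<exists>g. goodS VV AA B V A L r p (sub V p r u) g \<and> g u = w \<and> m = monoQ VV F B (sub V p r u) g"
    then obtain g where g: "goodS VV AA B V A L r p (sub V p r u) g" "g u = w" "m = monoQ VV F B (sub V p r u) g" by blast
    have uu: "u \<in> sub V p r u" by (rule sub_self[OF T u])
    have Lu: "L u \<le> B w" using g uu unfolding goodS_def by blast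
    have subv: "sub V p r v \<subseteq> sub V p r u" if "v \<in> ?C" for v using sub_decomp[OF T u] that by blast
    have gsub: "goodS VV AA B V A L r p (sub V p r v) g" if "v \<in> ?C" for v using goodS_mono[OF g(1) subv[OF that]] .
    have vV: "v \<in> V" if "v \<in> ?C" for v using that unfolding children_def by auto
    have gvV: "g v \<in> VV" if "v \<in> ?C" for v using gsub[OF that] sub_self[OF T vV[OF that]] unfolding goodS_def by blast
    have nzv: "Poly_Mapping.lookup (Qf n VV AA F B V A L r p v (g v)) (monoQ VV F B (sub V p r v) g) \<noteq> 0" if "v \<in> ?C" for v
      using IH[OF that gvV[OF that]] gsub[OF that] by blast
    have arcI: "(g v, w) \<in> AA" if "v \<in> ?I" for v using g uu that unfolding goodS_def by blast
    have arcO: "(w, g v) \<in> AA" if "v \<in> ?O" for v using g uu that unfolding goodS_def by blast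
    have PI: "Poly_Mapping.lookup ?PI (\<Sum>v\<in>?I. monoQ VV F B (sub V p r v) g) \<noteq> 0"
      unfolding lookup_prod_nz[OF finI]
    proof (intro exI conjI ballI)
      fix v assume v: "v \<in> ?I"
      then have vC: "v \<in> ?C" using CIO by blast
      show "Poly_Mapping.lookup (\<Sum>w' \<in> {w'. (w', w) \<in> AA}. Qf n VV AA F B V A L r p v w') (monoQ VV F B (sub V p r v) g) \<noteq> 0"
        unfolding lookup_sum_nz[OF finA(1)] using arcI[OF v] nzv[OF vC] by blast
    qed simp
    have PO: "Poly_Mapping.lookup ?PO (\<Sum>v\<in>?O. monoQ VV F B (sub V p r v) g) \<noteq> 0"
      unfolding lookup_prod_nz[OF finO]
    proof (intro exI conjI ballI)
      fix v assume v: "v \<in> ?O"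
      then have vC: "v \<in> ?C" using CIO by blast
      show "Poly_Mapping.lookup (\<Sum>w' \<in> {w'. (w, w') \<in> AA}. Qf n VV AA F B V A L r p v w') (monoQ VV F B (sub V p r v) g) \<noteq> 0"
        unfolding lookup_sum_nz[OF finA(2)] using arcO[OF v] nzv[OF vC] by blast
    qed simp
    have PP: "Poly_Mapping.lookup (?PI * ?PO) (\<Sum>v\<in>?C. monoQ VV F B (sub V p r v) g) \<noteq> 0"
      unfolding lookup_mult_nz
      by (intro exI[of _ "\<Sum>v\<in>?I. monoQ VV F B (sub V p r v) g"] exI[of _ "\<Sum>v\<in>?O. monoQ VV F B (sub V p r v) g"])
         (simp add: PI PO sumC)
    have "m = mv VV F B w + (\<Sum>v\<in>?C. monoQ VV F B (sub V p r v) g)"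
      using g mono_decomp[OF u, of g] by simp
    then have "Poly_Mapping.lookup (Poly_Mapping.single (mv VV F B w) 1 * (?PI * ?PO)) m \<noteq> 0"
      unfolding lookup_single1_mult_nz using PP by blast
    then show "Poly_Mapping.lookup (Qf (Suc n) VV AA F B V A L r p u w) m \<noteq> 0"
      unfolding Qeq if_P[OF Lu] mult.assoc .
  qed
qed

end




lemma sum_ind_card: "finite X \<Longrightarrow> (\<Sum>x\<in>X. (if P x then 1 else 0 :: nat)) = card {x\<in>X. P x}"
  by (simp add: sum.If_cases Int_def)

lemma lookup_mv_X: "Poly_Mapping.lookup (mv VV F B a) (Xv w) = (if a = w then 1 else 0)"
  unfolding mv_def by (simp add: lookup_add lookup_single when_def)

lemma lookup_mv_Z: "Poly_Mapping.lookup (mv VV F B a) Zv = (if a \<in> Sset VV F B then 1 else 0)"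
  unfolding mv_def by (simp add: lookup_add lookup_single when_def)

lemma lookup_mono_X: "finite X \<Longrightarrow> Poly_Mapping.lookup (monoQ VV F B X g) (Xv w) = card {x\<in>X. g x = w}"
  unfolding monoQ_def lookup_sum lookup_mv_X by (rule sum_ind_card)

lemma lookup_mono_Z: "finite X \<Longrightarrow> Poly_Mapping.lookup (monoQ VV F B X g) Zv = card {x\<in>X. g x \<in> Sset VV F B}"
  unfolding monoQ_def lookup_sum lookup_mv_Z by (rule sum_ind_card)

context
  fixes VV :: "'v set" and AA :: "('v \<times> 'v) set" and F B :: "'v \<Rightarrow> nat"
    and V :: "'a set" and A :: "('a \<times> 'a) set" and L :: "'a \<Rightarrow> nat"
    and r :: 'a and p :: "'a \<Rightarrow> 'a"
  assumes T: "rooted_oriented_tree V A r p" and fV: "finite VV" and sA: "AA \<subseteq> VV \<times> VV"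
begin

lemma Qpoly_char: "Poly_Mapping.lookup (Qpoly VV AA F B V A L r p) m \<noteq> 0 \<longleftrightarrow>
   (\<exists>g. goodS VV AA B V A L r p V g \<and> m = monoQ VV F B V g)"
proof -
  have r: "r \<in> V" by (rule T_r[OF T])
  have ch: "Poly_Mapping.lookup (Qf (card V) VV AA F B V A L r p r w) m \<noteq> 0 \<longleftrightarrow>
     (\<exists>g. goodS VV AA B V A L r p V g \<and> g r = w \<and> m = monoQ VV F B V g)" if "w \<in> VV" for w
    using Qf_char[OF T fV sA r that, where n="card V" and m=m] unfolding sub_root[OF T] by simp
  show ?thesis
    unfolding Qpoly_def Quw_def lookup_sum_nz[OF fV]
  proof
    assume "\<exists>w\<in>VV. Poly_Mapping.lookup (Qf (card V) VV AA F B V A L r p r w) m \<noteq> 0"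
    then show "\<exists>g. goodS VV AA B V A L r p V g \<and> m = monoQ VV F B V g" using ch by blast
  next
    assume "\<exists>g. goodS VV AA B V A L r p V g \<and> m = monoQ VV F B V g"
    then obtain g where g: "goodS VV AA B V A L r p V g" "m = monoQ VV F B V g" by blast
    then have "g r \<in> VV" using r unfolding goodS_def by blast
    then show "\<exists>w\<in>VV. Poly_Mapping.lookup (Qf (card V) VV AA F B V A L r p r w) m \<noteq> 0"
      using ch g by blast
  qed
qed

lemma main:
  "(\<exists>m. Poly_Mapping.lookup (Qpoly VV AA F B V A L r p) m \<noteq> 0
            \<and> Poly_Mapping.lookup m Zv = card (Sset VV F B)
            \<and> (\<exists>W \<subseteq> VV. card W = card V
                  \<and> (\<forall>w. Poly_Mapping.lookup m (Xv w) = (if w \<in> W then 1 else 0))))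
         \<longleftrightarrow> (\<exists>f. S_embedding VV AA F B V A L f)"
proof -
  have finV: "finite V" by (rule T_fin[OF T])
  have finS: "finite (Sset VV F B)" using fV unfolding Sset_def by simp
  have SV: "Sset VV F B \<subseteq> VV" unfolding Sset_def by auto
  show ?thesis
  proof
    assume "\<exists>m. Poly_Mapping.lookup (Qpoly VV AA F B V A L r p) m \<noteq> 0
            \<and> Poly_Mapping.lookup m Zv = card (Sset VV F B)
            \<and> (\<exists>W \<subseteq> VV. card W = card V
                  \<and> (\<forall>w. Poly_Mapping.lookup m (Xv w) = (if w \<in> W then 1 else 0)))"
    then obtain m W where m: "Poly_Mapping.lookup (Qpoly VV AA F B V A L r p) m \<noteq> 0"
      "Poly_Mapping.lookup m Zv = card (Sset VV F B)"
      "\<forall>w. Poly_Mapping.lookup m (Xv w) = (if w \<in> W then 1 else 0)" by blast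
    then obtain g where g: "goodS VV AA B V A L r p V g" "m = monoQ VV F B V g"
      unfolding Qpoly_char by blast
    have cw: "card {x\<in>V. g x = w} = (if w \<in> W then 1 else 0)" for w
      using m(3) g(2) lookup_mono_X[OF finV] by metis
    have inj: "inj_on g V"
    proof (rule inj_onI)
      fix x y assume x: "x \<in> V" and y: "y \<in> V" and e: "g x = g y"
      have "card {z\<in>V. g z = g x} \<le> Suc 0" using cw[of "g x"] by simp
      then show "x = y" using x y e card_le_Suc0_iff_eq[of "{z\<in>V. g z = g x}"] finV by auto
    qed
    have cz: "card {x\<in>V. g x \<in> Sset VV F B} = card (Sset VV F B)"
      using m(2) g(2) lookup_mono_Z[OF finV] by metis
    have "g ` {x\<in>V. g x \<in> Sset VV F B} = g ` V \<inter> Sset VV F B" by blast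
    moreover have "card (g ` {x\<in>V. g x \<in> Sset VV F B}) = card {x\<in>V. g x \<in> Sset VV F B}"
      by (rule card_image) (rule inj_on_subset[OF inj], blast)
    ultimately have "card (g ` V \<inter> Sset VV F B) = card (Sset VV F B)" using cz by simp
    then have "g ` V \<inter> Sset VV F B = Sset VV F B" using card_subset_eq[OF finS] by blast
    then have Ssub: "Sset VV F B \<subseteq> g ` V" by blast
    have gV: "g ` V \<subseteq> VV" and gL: "\<forall>v\<in>V. L v \<le> B (g v)" using g(1) unfolding goodS_def by blast+
    have arcs: "\<forall>(a, b)\<in>A. (g a, g b) \<in> AA"
    proof (intro ballI, clarify)
      fix a b assume ab: "(a, b) \<in> A"
      have aV: "a \<in> V" and bV: "b \<in> V" using ab T_A[OF T] by blast+
      have "(b \<noteq> r \<and> a = p b) \<or> (a \<noteq> r \<and> b = p a)" by (rule T_arc[OF T ab])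
      then show "(g a, g b) \<in> AA"
      proof
        assume h: "b \<noteq> r \<and> a = p b"
        then have "b \<in> N_out V A r p a" unfolding N_out_def children_def using ab bV by simp
        then show ?thesis using g(1) aV unfolding goodS_def by blast
      next
        assume h: "a \<noteq> r \<and> b = p a"
        then have "a \<in> N_in V A r p b" unfolding N_in_def children_def using ab aV by simp
        then show ?thesis using g(1) bV unfolding goodS_def by blast
      qed
    qed
    show "\<exists>f. S_embedding VV AA F B V A L f"
      unfolding S_embedding_def using inj gV arcs Ssub gL by blast
  next
    assume "\<exists>f. S_embedding VV AA F B V A L f"
    then obtain f where inj: "inj_on f V" and fV': "f ` V \<subseteq> VV" and arcs: "\<forall>(u, v)\<in>A. (f u, f v) \<in> AA"
      and Ssub: "Sset VV F B \<subseteq> f ` V" and fL: "\<forall>v\<in>V. L v \<le> B (f v)"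
      unfolding S_embedding_def by blast
    have good: "goodS VV AA B V A L r p V f"
      unfolding goodS_def N_in_def N_out_def using fV' fL arcs by blast
    have nz: "Poly_Mapping.lookup (Qpoly VV AA F B V A L r p) (monoQ VV F B V f) \<noteq> 0"
      unfolding Qpoly_char using good by blast
    have "f ` {x\<in>V. f x \<in> Sset VV F B} = Sset VV F B" using Ssub by blast
    moreover have "card (f ` {x\<in>V. f x \<in> Sset VV F B}) = card {x\<in>V. f x \<in> Sset VV F B}"
      by (rule card_image) (rule inj_on_subset[OF inj], blast)
    ultimately have z: "Poly_Mapping.lookup (monoQ VV F B V f) Zv = card (Sset VV F B)"
      unfolding lookup_mono_Z[OF finV] by simp
    have cW: "card (f ` V) = card V" by (rule card_image[OF inj])
    have x: "Poly_Mapping.lookup (monoQ VV F B V f) (Xv w) = (if w \<in> f ` V then 1 else 0)" for w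
    proof (cases "w \<in> f ` V")
      case True
      then obtain x0 where x0: "x0 \<in> V" "w = f x0" by blast
      have e: "{x\<in>V. f x = w} = {x0}" using x0 inj unfolding inj_on_def by blast
      show ?thesis unfolding lookup_mono_X[OF finV] e using True by simp
    next
      case False
      then have e: "{x\<in>V. f x = w} = {}" by blast
      show ?thesis unfolding lookup_mono_X[OF finV] e using False by simp
    qed
    show "\<exists>m. Poly_Mapping.lookup (Qpoly VV AA F B V A L r p) m \<noteq> 0
            \<and> Poly_Mapping.lookup m Zv = card (Sset VV F B)
            \<and> (\<exists>W \<subseteq> VV. card W = card V
                  \<and> (\<forall>w. Poly_Mapping.lookup m (Xv w) = (if w \<in> W then 1 else 0)))"
      using nz z cW x fV' by blast
  qed
qed

end


theorem lemma4:
  fixes \<V> :: "'v set" and \<A> :: "('v \<times> 'v) set" and F B :: "'v \<Rightarrow> nat"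
    and V :: "'a set" and A :: "('a \<times> 'a) set" and L :: "'a \<Rightarrow> nat"
    and r :: 'a and p :: "'a \<Rightarrow> 'a"
  assumes "finite \<V>" and "\<A> \<subseteq> \<V> \<times> \<V>"
    and "\<forall>w \<in> \<V>. F w \<in> {0, 1}"
    and "rooted_oriented_tree V A r p"
  shows "(\<exists>m. Poly_Mapping.lookup (Qpoly \<V> \<A> F B V A L r p) m \<noteq> 0
            \<and> Poly_Mapping.lookup m Zv = card (Sset \<V> F B)
            \<and> (\<exists>W \<subseteq> \<V>. card W = card V
                  \<and> (\<forall>w. Poly_Mapping.lookup m (Xv w) = (if w \<in> W then 1 else 0))))
         \<longleftrightarrow> (\<exists>f. S_embedding \<V> \<A> F B V A L f)"
  using main[OF assms(4) assms(1) assms(2)] .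

end
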